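(* Let $n\ge3$, $q\in\{1,\dots,n-1\}$ and $k=\gcd(n,q)$. For $r\in\{1,\dots,n-1\}$ and $x,y\in\mathbb R^n$ define the biquadratic form $$B_{\Phi^{(n,r)}}(x;y)=(n-2)\sum_{i=1}^n x_i^2y_i^2+\sum_{i=1}^n x_{\sigma_r(i)}^2y_i^2-2\sum_{1\le i<j\le n}x_iy_ix_jy_j,$$ regarded as an element of $\mathcal P_{2n,4}$. Then $B_{\Phi^{(n,q)}}$ is extremal in $\mathcal P_{2n,4}$ if and only if $B_{\Phi^{(n,k)}}$ is extremal in $\mathcal P_{2n,4}$.
   Context: $\sigma_r(i)\equiv i+r\pmod n$ with values in $\{1,\dots,n\}$. $\mathcal P_{m,d}$ is the convex cone of positive semidefinite real forms in $m$ variables of degree $d$; these forms $B_{\Phi^{(n,r)}}$ are positive semidefinite. A form $F\in\mathcal P_{m,d}$ is extremal if $F=F_1+F_2$ with $F_i\in\mathcal P_{m,d}$ implies $F_i=\lambda_iF$ with $\lambda_i\ge0$. *)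

theory Defs
  imports Complex_Main
begin

text \<open>Real forms (homogeneous polynomials) of degree d in m variables, represented
as polynomial functions of z :: nat \<Rightarrow> real that use only the variables z 0, ..., z (m-1).
Over the reals a polynomial function determines its coefficients, so this is faithful.\<close>

definition exps :: "nat \<Rightarrow> nat \<Rightarrow> (nat \<Rightarrow> nat) set" where
  "exps m d = {\<alpha>. (\<forall>i\<ge>m. \<alpha> i = 0) \<and> (\<Sum>i<m. \<alpha> i) = d}"

definition is_form :: "nat \<Rightarrow> nat \<Rightarrow> ((nat \<Rightarrow> real) \<Rightarrow> real) \<Rightarrow> bool" where
  "is_form m d F \<longleftrightarrow> (\<exists>c :: (nat \<Rightarrow> nat) \<Rightarrow> real.
      \<forall>z. F z = (\<Sum>\<alpha>\<in>exps m d. c \<alpha> * (\<Prod>i<m. z i ^ \<alpha> i)))"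

definition psd_forms :: "nat \<Rightarrow> nat \<Rightarrow> ((nat \<Rightarrow> real) \<Rightarrow> real) set" where
  "psd_forms m d = {F. is_form m d F \<and> (\<forall>z. 0 \<le> F z)}"

definition extremal :: "nat \<Rightarrow> nat \<Rightarrow> ((nat \<Rightarrow> real) \<Rightarrow> real) \<Rightarrow> bool" where
  "extremal m d F \<longleftrightarrow> F \<in> psd_forms m d \<and>
     (\<forall>F1 \<in> psd_forms m d. \<forall>F2 \<in> psd_forms m d.
        (\<forall>z. F z = F1 z + F2 z) \<longrightarrow>
        (\<exists>l1\<ge>0. \<forall>z. F1 z = l1 * F z) \<and> (\<exists>l2\<ge>0. \<forall>z. F2 z = l2 * F z))"

text \<open>The biquadratic form B_{Phi^(n,r)}; 0-indexed: x_i = z i, y_i = z (n+i) for i < n,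
and sigma_r(i) = (i + r) mod n.\<close>
definition B_Phi :: "nat \<Rightarrow> nat \<Rightarrow> (nat \<Rightarrow> real) \<Rightarrow> real" where
  "B_Phi n r z =
     (real n - 2) * (\<Sum>i<n. (z i)^2 * (z (n+i))^2)
     + (\<Sum>i<n. (z ((i + r) mod n))^2 * (z (n+i))^2)
     - 2 * (\<Sum>j<n. \<Sum>i<j. z i * z (n+i) * z j * z (n+j))"

end

theory Submission
  imports Defs "HOL-Combinatorics.Permutations" "HOL-Number_Theory.Cong"
begin

lemma exps_comp:
  assumes p: "p permutes {..<m}" and b: "\<beta> \<in> exps m d"
  shows "\<beta> \<circ> p \<in> exps m d"
proof -
  have "\<forall>i\<ge>m. (\<beta> \<circ> p) i = 0"
    using b permutes_not_in[OF p] by (auto simp: exps_def)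
  moreover have "(\<Sum>i<m. (\<beta> \<circ> p) i) = d"
    using b sum.permute[OF p, of \<beta>] by (simp add: exps_def)
  ultimately show ?thesis by (simp add: exps_def)
qed

lemma is_form_perm:
  assumes p: "p permutes {..<m}" and F: "is_form m d F"
  shows "is_form m d (\<lambda>z. F (z \<circ> p))"
proof -
  obtain c where c: "\<And>z. F z = (\<Sum>\<alpha>\<in>exps m d. c \<alpha> * (\<Prod>i<m. z i ^ \<alpha> i))"
    using F unfolding is_form_def by blast
  have ip: "inv p permutes {..<m}" using permutes_inv[OF p] .
  have bij: "bij_betw (\<lambda>\<beta>. \<beta> \<circ> p) (exps m d) (exps m d)"
    apply (rule bij_betw_byWitness[where f'="\<lambda>\<alpha>. \<alpha> \<circ> inv p"])
    using exps_comp[OF p] exps_comp[OF ip]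
    by (auto simp: comp_assoc permutes_inv_o[OF p])
  have "F (z \<circ> p) = (\<Sum>\<beta>\<in>exps m d. c (\<beta> \<circ> p) * (\<Prod>i<m. z i ^ \<beta> i))" for z
  proof -
    have "F (z \<circ> p) = (\<Sum>\<alpha>\<in>exps m d. c \<alpha> * (\<Prod>i<m. z (p i) ^ \<alpha> i))"
      by (simp add: c)
    also have "\<dots> = (\<Sum>\<beta>\<in>exps m d. c (\<beta> \<circ> p) * (\<Prod>i<m. z (p i) ^ \<beta> (p i)))"
      using sum.reindex_bij_betw[OF bij, of "\<lambda>\<alpha>. c \<alpha> * (\<Prod>i<m. z (p i) ^ \<alpha> i)"]
      by simp
    also have "\<dots> = (\<Sum>\<beta>\<in>exps m d. c (\<beta> \<circ> p) * (\<Prod>i<m. z i ^ \<beta> i))"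
    proof (rule sum.cong[OF refl])
      fix \<beta> assume "\<beta> \<in> exps m d"
      have "(\<Prod>i<m. z i ^ \<beta> i) = (\<Prod>i<m. z (p i) ^ \<beta> (p i))"
        using prod.permute[OF p, of "\<lambda>i. z i ^ \<beta> i"] by (simp add: o_def)
      then show "c (\<beta> \<circ> p) * (\<Prod>i<m. z (p i) ^ \<beta> (p i)) = c (\<beta> \<circ> p) * (\<Prod>i<m. z i ^ \<beta> i)"
        by simp
    qed
    finally show ?thesis .
  qed
  then show ?thesis unfolding is_form_def by (intro exI[of _ "\<lambda>\<beta>. c (\<beta> \<circ> p)"]) blast
qed

lemma psd_perm:
  assumes p: "p permutes {..<m}" and F: "F \<in> psd_forms m d"
  shows "(\<lambda>z. F (z \<circ> p)) \<in> psd_forms m d"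
  using F is_form_perm[OF p] by (auto simp: psd_forms_def)

lemma comp_inv_cancel:
  assumes p: "p permutes S"
  shows "z \<circ> inv p \<circ> p = z" "z \<circ> p \<circ> inv p = z"
  by (simp_all add: comp_assoc permutes_inv_o[OF p])

lemma extremal_perm:
  assumes p: "p permutes {..<m}" and E: "extremal m d F"
  shows "extremal m d (\<lambda>z. F (z \<circ> p))"
  unfolding extremal_def
proof (intro conjI ballI impI)
  have ip: "inv p permutes {..<m}" using permutes_inv[OF p] .
  show "(\<lambda>z. F (z \<circ> p)) \<in> psd_forms m d"
    using psd_perm[OF p] E by (auto simp: extremal_def)
  fix F1 F2 assume F1: "F1 \<in> psd_forms m d" and F2: "F2 \<in> psd_forms m d"
    and eq: "\<forall>z. F (z \<circ> p) = F1 z + F2 z"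
  have G1: "(\<lambda>z. F1 (z \<circ> inv p)) \<in> psd_forms m d" using psd_perm[OF ip F1] .
  have G2: "(\<lambda>z. F2 (z \<circ> inv p)) \<in> psd_forms m d" using psd_perm[OF ip F2] .
  have "\<forall>z. F z = F1 (z \<circ> inv p) + F2 (z \<circ> inv p)"
    using eq comp_inv_cancel[OF p] by metis
  moreover have H: "\<forall>F1 \<in> psd_forms m d. \<forall>F2 \<in> psd_forms m d.
        (\<forall>z. F z = F1 z + F2 z) \<longrightarrow>
        (\<exists>l1\<ge>0. \<forall>z. F1 z = l1 * F z) \<and> (\<exists>l2\<ge>0. \<forall>z. F2 z = l2 * F z)"
    using E unfolding extremal_def by blast
  ultimately have R: "(\<exists>l1\<ge>0. \<forall>z. F1 (z \<circ> inv p) = l1 * F z) \<and> (\<exists>l2\<ge>0. \<forall>z. F2 (z \<circ> inv p) = l2 * F z)"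
    using H[rule_format, OF G1 G2] by simp
  show "\<exists>l1\<ge>0. \<forall>z. F1 z = l1 * F (z \<circ> p)"
  proof -
    obtain l where "l \<ge> 0" "\<forall>z. F1 (z \<circ> inv p) = l * F z" using R by blast
    then show ?thesis using comp_inv_cancel[OF p] by metis
  qed
  show "\<exists>l2\<ge>0. \<forall>z. F2 z = l2 * F (z \<circ> p)"
  proof -
    obtain l where "l \<ge> 0" "\<forall>z. F2 (z \<circ> inv p) = l * F z" using R by blast
    then show ?thesis using comp_inv_cancel[OF p] by metis
  qed
qed

lemma extremal_perm_iff:
  assumes p: "p permutes {..<m}"
  shows "extremal m d (\<lambda>z. F (z \<circ> p)) \<longleftrightarrow> extremal m d F"
proof
  assume "extremal m d (\<lambda>z. F (z \<circ> p))"
  from extremal_perm[OF permutes_inv[OF p] this] show "extremal m d F"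
    by (simp add: comp_inv_cancel[OF p])
qed (rule extremal_perm[OF p])

lemma pair_sum:
  fixes f :: "nat \<Rightarrow> real"
  shows "2 * (\<Sum>j<n. \<Sum>i<j. f i * f j) = (\<Sum>i<n. f i)^2 - (\<Sum>i<n. (f i)^2)"
proof (induction n)
  case 0 then show ?case by simp
next
  case (Suc n)
  have "2 * (\<Sum>j<Suc n. \<Sum>i<j. f i * f j) = 2 * (\<Sum>j<n. \<Sum>i<j. f i * f j) + 2 * (\<Sum>i<n. f i) * f n"
    by (simp add: sum_distrib_right sum_distrib_left algebra_simps)
  also have "\<dots> = (\<Sum>i<Suc n. f i)^2 - (\<Sum>i<Suc n. (f i)^2)"
    using Suc by (simp add: power2_eq_square algebra_simps)
  finally show ?case .
qed

lemma B_alt: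
  "B_Phi n r z = (real n - 2) * (\<Sum>i<n. (z i)^2 * (z (n+i))^2)
     + (\<Sum>i<n. (z ((i + r) mod n))^2 * (z (n+i))^2)
     - ((\<Sum>i<n. z i * z (n+i))^2 - (\<Sum>i<n. (z i * z (n+i))^2))"
proof -
  have "2 * (\<Sum>j<n. \<Sum>i<j. z i * z (n+i) * z j * z (n+j)) = 2 * (\<Sum>j<n. \<Sum>i<j. (z i * z (n+i)) * (z j * z (n+j)))"
    by (simp add: mult.assoc)
  also have "\<dots> = (\<Sum>i<n. z i * z (n+i))^2 - (\<Sum>i<n. (z i * z (n+i))^2)"
    by (rule pair_sum)
  finally show ?thesis unfolding B_Phi_def by linarith
qed


lemma qmod:
  fixes k n' q' x :: nat
  shows "(k*q' * (x mod n')) mod (k*n') = (k*q'*x) mod (k*n')"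
proof -
  have "x = x mod n' + n'*(x div n')" by simp
  then have "k*q'*x = k*q'*(x mod n' + n'*(x div n'))" by (rule arg_cong[where f="\<lambda>t. k*q'*t"])
  also have "\<dots> = k*q' * (x mod n') + (k*n') * (q' * (x div n'))"
    by (simp only: distrib_left mult_ac)
  finally have "k*q'*x = k*q' * (x mod n') + (k*n') * (q' * (x div n'))" .
  then show ?thesis by simp
qed

lemma div_mod_mult2:
  fixes a k n' :: nat
  assumes "0 < k"
  shows "(a mod (k*n')) div k = (a div k) mod n'"
proof -
  have "a mod (k*n') = k*(a div k mod n') + a mod k" by (rule mod_mult2_eq)
  then show ?thesis using assms by simp
qed

lemma conj_perm:
  fixes n k q n' q' :: nat
  assumes k: "0 < k" and n: "0 < n" and nk: "n = k*n'" and qk: "q = k*q'" and cop: "coprime q' n'"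
  defines "\<pi> \<equiv> \<lambda>i. if i < n then (i mod k + q*(i div k)) mod n else i"
  shows "\<pi> permutes {..<n}" and "\<And>i. i<n \<Longrightarrow> \<pi> ((i+k) mod n) = (\<pi> i + q) mod n"
proof -
  have kn: "k dvd n" using nk by simp
  have kq: "k dvd q" using qk by simp
  show "\<pi> ((i+k) mod n) = (\<pi> i + q) mod n" if i: "i < n" for i
  proof -
    have lt: "(i+k) mod n < n" using n by simp
    have e1: "(i+k) mod n mod k = i mod k"
      using mod_mod_cancel[OF kn] by simp
    have e2: "(i+k) mod n div k = (i div k + 1) mod n'"
      using div_mod_mult2[OF k, of "i+k" n'] nk k by (simp add: div_add_self2)
    have "\<pi> ((i+k) mod n) = (i mod k + q*((i div k + 1) mod n')) mod n"
      using lt e1 e2 by (simp add: \<pi>_def)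
    also have "\<dots> = (i mod k + q*(i div k + 1)) mod n"
    proof (rule mod_add_cong[OF refl])
      show "q * ((i div k + 1) mod n') mod n = q * (i div k + 1) mod n"
        using qmod[of k q' "i div k + 1" n'] nk qk by simp
    qed
    also have "\<dots> = ((i mod k + q*(i div k)) mod n + q) mod n"
    proof -
      have "i mod k + q*(i div k + 1) = (i mod k + q*(i div k)) + q" by simp
      then show ?thesis by (metis mod_add_left_eq)
    qed
    also have "\<dots> = (\<pi> i + q) mod n" using i by (simp add: \<pi>_def)
    finally show ?thesis .
  qed
  have inj: "inj_on \<pi> {..<n}"
  proof (rule inj_onI)
    fix i j assume i: "i \<in> {..<n}" and j: "j \<in> {..<n}" and eq: "\<pi> i = \<pi> j"
    have mk: "(x mod k + q*y) mod n mod k = x mod k" for x y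
    proof -
      have "(x mod k + q*y) mod n mod k = (x mod k + q*y) mod k" by (rule mod_mod_cancel[OF kn])
      also have "\<dots> = (x mod k + k*(q'*y)) mod k" using qk by (simp add: mult.assoc)
      also have "\<dots> = x mod k" by simp
      finally show ?thesis .
    qed
    from eq i j have eq2: "(i mod k + q*(i div k)) mod n = (j mod k + q*(j div k)) mod n"
      by (simp add: \<pi>_def)
    then have a: "i mod k = j mod k" using mk[of i "i div k"] mk[of j "j div k"] by simp
    with eq2 have "[q*(i div k) = q*(j div k)] (mod n)"
      by (simp add: cong_def[symmetric] cong_add_lcancel_nat)
    then have "(k*(q'*(i div k))) mod (k*n') = (k*(q'*(j div k))) mod (k*n')"
      using nk qk by (simp add: cong_def mult.assoc)
    then have "[q'*(i div k) = q'*(j div k)] (mod n')"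
      using k by (simp add: mod_mult_mult1 cong_def)
    then have "[i div k = j div k] (mod n')"
      using cong_mult_lcancel_nat[OF cop] by simp
    moreover have "i div k < n'" "j div k < n'"
      using i j nk k by (auto simp: less_mult_imp_div_less mult.commute)
    ultimately have b: "i div k = j div k" by (rule cong_less_modulus_unique_nat)
    show "i = j" using a b by (metis div_mult_mod_eq)
  qed
  have img: "\<pi> ` {..<n} \<subseteq> {..<n}" using n by (auto simp: \<pi>_def)
  have "bij_betw \<pi> {..<n} {..<n}"
    using endo_inj_surj[OF _ img inj] inj by (simp add: bij_betw_def)
  then show "\<pi> permutes {..<n}"
    by (rule bij_imp_permutes) (simp add: \<pi>_def)
qed


theorem proposition4:
  fixes n q :: nat
  assumes "n \<ge> 3" and "1 \<le> q" and "q \<le> n - 1"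
  shows "extremal (2*n) 4 (B_Phi n q) \<longleftrightarrow> extremal (2*n) 4 (B_Phi n (gcd n q))"
proof -
  define k where "k = gcd n q"
  have n0: "0 < n" using assms by simp
  have k0: "0 < k" using assms by (simp add: k_def)
  define n' where "n' = n div k"
  define q' where "q' = q div k"
  have nk: "n = k*n'" by (simp add: k_def n'_def)
  have qk: "q = k*q'" by (simp add: k_def q'_def)
  have cop: "coprime q' n'"
    using div_gcd_coprime[of n q] n0 by (simp add: k_def n'_def q'_def coprime_commute)
  define \<pi> where "\<pi> \<equiv> \<lambda>i. if i < n then (i mod k + q*(i div k)) mod n else i"
  have pp: "\<pi> permutes {..<n}" unfolding \<pi>_def by (rule conj_perm(1)[OF k0 n0 nk qk cop])
  have pc: "\<And>i. i<n \<Longrightarrow> \<pi> ((i+k) mod n) = (\<pi> i + q) mod n"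
    unfolding \<pi>_def by (rule conj_perm(2)[OF k0 n0 nk qk cop])
  have plt: "\<And>i. i < n \<Longrightarrow> \<pi> i < n" using permutes_in_image[OF pp] by simp
  have pinj: "\<And>i j. \<pi> i = \<pi> j \<Longrightarrow> i = j" using permutes_inj[OF pp] by (simp add: inj_def)
  define \<rho> where "\<rho> \<equiv> \<lambda>i. if i < n then \<pi> i else if i < 2*n then n + \<pi> (i - n) else i"
  have rinj: "inj_on \<rho> {..<2*n}"
  proof (rule inj_onI)
    fix i j assume i: "i \<in> {..<2*n}" and j: "j \<in> {..<2*n}" and e: "\<rho> i = \<rho> j"
    show "i = j"
    proof (cases "i < n")
      case True
      show ?thesis
      proof (cases "j < n")
        case True with \<open>i < n\<close> e show ?thesis by (auto simp: \<rho>_def dest: pinj)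
      next
        case False with \<open>i < n\<close> e j plt[of i] show ?thesis by (auto simp: \<rho>_def)
      qed
    next
      case False
      show ?thesis
      proof (cases "j < n")
        case True with \<open>\<not> i < n\<close> e i plt[of j] show ?thesis by (auto simp: \<rho>_def)
      next
        case False with \<open>\<not> i < n\<close> e i j have "\<pi> (i - n) = \<pi> (j - n)" by (auto simp: \<rho>_def)
        then have "i - n = j - n" by (rule pinj)
        with False \<open>\<not> i < n\<close> show ?thesis by simp
      qed
    qed
  qed
  have rimg: "\<rho> ` {..<2*n} \<subseteq> {..<2*n}"
  proof
    fix y assume "y \<in> \<rho> ` {..<2*n}"
    then obtain i where i: "i < 2*n" "y = \<rho> i" by auto
    show "y \<in> {..<2*n}"
    proof (cases "i < n")
      case True then show ?thesis using i plt[of i] by (simp add: \<rho>_def)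
    next
      case False then have "i - n < n" using i by simp
      then show ?thesis using i False plt[of "i - n"] by (simp add: \<rho>_def)
    qed
  qed
  have rperm: "\<rho> permutes {..<2*n}"
  proof (rule bij_imp_permutes)
    show "bij_betw \<rho> {..<2*n} {..<2*n}"
      using endo_inj_surj[OF _ rimg rinj] rinj by (simp add: bij_betw_def)
    show "\<And>x. x \<notin> {..<2*n} \<Longrightarrow> \<rho> x = x" by (simp add: \<rho>_def)
  qed
  have reidx: "(\<Sum>i<n. g (\<pi> i)) = (\<Sum>i<n. g i)" for g :: "nat \<Rightarrow> real"
    using sum.permute[OF pp, of g] by (simp add: o_def)
  have Beq: "B_Phi n q z = B_Phi n k (z \<circ> \<rho>)" for z
  proof -
    let ?w = "z \<circ> \<rho>"
    have w1: "?w i = z (\<pi> i)" if "i < n" for i using that by (simp add: \<rho>_def)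
    have w2: "?w (n+i) = z (n + \<pi> i)" if "i < n" for i using that by (simp add: \<rho>_def)
    have w3: "?w ((i+k) mod n) = z ((\<pi> i + q) mod n)" if "i < n" for i
      using that n0 pc[OF that] by (simp add: \<rho>_def)
    have s1: "(\<Sum>i<n. (?w i)^2 * (?w (n+i))^2) = (\<Sum>i<n. (z i)^2 * (z (n+i))^2)"
    proof -
      have "(\<Sum>i<n. (?w i)^2 * (?w (n+i))^2) = (\<Sum>i<n. (z (\<pi> i))^2 * (z (n + \<pi> i))^2)"
        by (rule sum.cong) (simp_all add: w1 w2 del: o_apply)
      also have "\<dots> = (\<Sum>i<n. (z i)^2 * (z (n+i))^2)" by (rule reidx)
      finally show ?thesis .
    qed
    have s2: "(\<Sum>i<n. (?w ((i + k) mod n))^2 * (?w (n+i))^2) = (\<Sum>i<n. (z ((i + q) mod n))^2 * (z (n+i))^2)"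
    proof -
      have "(\<Sum>i<n. (?w ((i + k) mod n))^2 * (?w (n+i))^2) = (\<Sum>i<n. (z ((\<pi> i + q) mod n))^2 * (z (n + \<pi> i))^2)"
        by (rule sum.cong) (simp_all add: w2 w3 del: o_apply)
      also have "\<dots> = (\<Sum>i<n. (z ((i + q) mod n))^2 * (z (n+i))^2)" by (rule reidx)
      finally show ?thesis .
    qed
    have s3: "(\<Sum>i<n. ?w i * ?w (n+i)) = (\<Sum>i<n. z i * z (n+i))"
    proof -
      have "(\<Sum>i<n. ?w i * ?w (n+i)) = (\<Sum>i<n. z (\<pi> i) * z (n + \<pi> i))"
        by (rule sum.cong) (simp_all add: w1 w2 del: o_apply)
      also have "\<dots> = (\<Sum>i<n. z i * z (n+i))" by (rule reidx)
      finally show ?thesis .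
    qed
    have s4: "(\<Sum>i<n. (?w i * ?w (n+i))^2) = (\<Sum>i<n. (z i * z (n+i))^2)"
    proof -
      have "(\<Sum>i<n. (?w i * ?w (n+i))^2) = (\<Sum>i<n. (z (\<pi> i) * z (n + \<pi> i))^2)"
        by (rule sum.cong) (simp_all add: w1 w2 del: o_apply)
      also have "\<dots> = (\<Sum>i<n. (z i * z (n+i))^2)" by (rule reidx)
      finally show ?thesis .
    qed
    show ?thesis unfolding B_alt[of n q z] B_alt[of n k ?w] s1 s2 s3 s4 ..
  qed
  have "B_Phi n q = (\<lambda>z. B_Phi n k (z \<circ> \<rho>))" using Beq by (rule ext)
  then show ?thesis
    using extremal_perm_iff[OF rperm, of 4 "B_Phi n k"] by (simp add: k_def)
qed

end
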